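(* Let $\sim$ be a right congruence of finite index on $\Sigma^*$ with suffix expansion $\approx$. If $\sim$ has a critical tuple, then $|\Sigma^{\le n}/{\approx}|$ grows exponentially, and there exists a critical tuple $(u_2,v_2,u,v)$ in $\sim$ such that $u_2u\sim u_2wu$ and $v_2u\sim v_2wu$ for all $w\in\{u,v\}^*$.
   Context: Suffix expansion: $a_1\cdots a_n\approx b_1\cdots b_m$ iff $n=m$ and $a_i\cdots a_n\sim b_i\cdots b_n$ for all $i$. A critical tuple in a right congruence $\sim$ is $(u_2,v_2,u,v)$ with $|u_2|=|v_2|\ge1$, $u=u_1u_2$, $v=v_1v_2$ for some $u_1,v_1$, and $u_2w\not\sim v_2w$ for all $w\in\{u,v\}^*$. Exponential growth of $\gamma$: $\gamma(n)\ge c^n$ for some $c>1$ and infinitely many $n$. *)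

theory Defs
  imports Complex_Main
begin

definition right_congruence :: "('a list \<Rightarrow> 'a list \<Rightarrow> bool) \<Rightarrow> bool" where
  "right_congruence R \<longleftrightarrow> equivp R \<and> (\<forall>x y z. R x y \<longrightarrow> R (x @ z) (y @ z))"

definition finite_index :: "('a list \<Rightarrow> 'a list \<Rightarrow> bool) \<Rightarrow> bool" where
  "finite_index R \<longleftrightarrow> finite (UNIV // {(x, y). R x y})"

definition suffix_exp :: "('a list \<Rightarrow> 'a list \<Rightarrow> bool) \<Rightarrow> 'a list \<Rightarrow> 'a list \<Rightarrow> bool" where
  "suffix_exp R x y \<longleftrightarrow> length x = length y \<and> (\<forall>i < length x. R (drop i x) (drop i y))"

definition word_star :: "'a list set \<Rightarrow> 'a list set" where
  "word_star A = {concat ws | ws. set ws \<subseteq> A}"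

definition critical_tuple ::
  "('a list \<Rightarrow> 'a list \<Rightarrow> bool) \<Rightarrow> 'a list \<Rightarrow> 'a list \<Rightarrow> 'a list \<Rightarrow> 'a list \<Rightarrow> bool" where
  "critical_tuple R u2 v2 u v \<longleftrightarrow>
     length u2 = length v2 \<and> length u2 \<ge> 1 \<and>
     (\<exists>u1. u = u1 @ u2) \<and> (\<exists>v1. v = v1 @ v2) \<and>
     (\<forall>w \<in> word_star {u, v}. \<not> R (u2 @ w) (v2 @ w))"

definition exp_growth :: "(nat \<Rightarrow> nat) \<Rightarrow> bool" where
  "exp_growth \<gamma> \<longleftrightarrow> (\<exists>c::real. c > 1 \<and> infinite {n. real (\<gamma> n) \<ge> c ^ n})"

definition suffix_growth :: "('a list \<Rightarrow> 'a list \<Rightarrow> bool) \<Rightarrow> nat \<Rightarrow> nat" where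
  "suffix_growth R n = card ({xs. length xs \<le> n} // {(x, y). suffix_exp R x y})"

end

theory Submission
  imports Defs
begin

lemma ws_nil: "[] \<in> word_star A"
  unfolding word_star_def by (auto intro: exI[of _ "[]"])

lemma ws_single: "x \<in> A \<Longrightarrow> x \<in> word_star A"
  unfolding word_star_def by (auto intro!: exI[of _ "[x]"])

lemma ws_app: "x \<in> word_star A \<Longrightarrow> y \<in> word_star A \<Longrightarrow> x @ y \<in> word_star A"
proof -
  assume "x \<in> word_star A" "y \<in> word_star A"
  then obtain ws1 ws2 where "x = concat ws1" "set ws1 \<subseteq> A" "y = concat ws2" "set ws2 \<subseteq> A"
    unfolding word_star_def by auto
  then show ?thesis unfolding word_star_def by (auto intro!: exI[of _ "ws1 @ ws2"])
qed

lemma ws_concat: "set ws \<subseteq> word_star A \<Longrightarrow> concat ws \<in> word_star A"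
  by (induction ws) (auto intro: ws_nil ws_app)

lemma ws_mono: "A \<subseteq> word_star B \<Longrightarrow> word_star A \<subseteq> word_star B"
  unfolding word_star_def[of A] using ws_concat[of _ B] by auto

definition pw :: "'a list \<Rightarrow> nat \<Rightarrow> 'a list" where
  "pw x n = concat (replicate n x)"

lemma pw_add: "pw x (a + b) = pw x a @ pw x b"
  by (simp add: pw_def replicate_add)

lemma pw_Suc: "pw x (Suc n) = x @ pw x n"
  by (simp add: pw_def)

lemma pw_Suc2: "pw x (Suc n) = pw x n @ x"
  using pw_add[of x n 1] by (simp add: pw_def)

lemma pw_ws: "x \<in> word_star A \<Longrightarrow> pw x n \<in> word_star A"
  by (induction n) (auto simp: pw_def intro: ws_nil ws_app)

definition teq :: "('a list \<Rightarrow> 'a list \<Rightarrow> bool) \<Rightarrow> 'a list \<Rightarrow> 'a list \<Rightarrow> bool" where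
  "teq R x y \<longleftrightarrow> (\<forall>p. R (p @ x) (p @ y))"

definition cls :: "('a list \<Rightarrow> 'a list \<Rightarrow> bool) \<Rightarrow> 'a list \<Rightarrow> 'a list set" where
  "cls R p = {q. R p q}"

definition img :: "('a list \<Rightarrow> 'a list \<Rightarrow> bool) \<Rightarrow> 'a list \<Rightarrow> 'a list set set" where
  "img R x = {cls R (p @ x) | p. True}"

definition grph :: "('a list \<Rightarrow> 'a list \<Rightarrow> bool) \<Rightarrow> 'a list \<Rightarrow> ('a list set \<times> 'a list set) set" where
  "grph R x = {(cls R p, cls R (p @ x)) | p. True}"

locale rcong =
  fixes R :: "'a list \<Rightarrow> 'a list \<Rightarrow> bool"
  assumes eqv: "equivp R"
    and rc: "R x y \<Longrightarrow> R (x @ z) (y @ z)"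
    and fin: "finite (UNIV // {(x, y). R x y})"
begin

lemma Rrefl: "R x x" using eqv by (meson equivp_reflp)
lemma Rsym: "R x y \<Longrightarrow> R y x" using eqv by (meson equivp_symp)
lemma Rtrans: "R x y \<Longrightarrow> R y z \<Longrightarrow> R x z" using eqv by (meson equivp_transp)

lemma cls_eq: "cls R p = cls R q \<longleftrightarrow> R p q"
proof
  assume "cls R p = cls R q"
  then have "q \<in> cls R p" using Rrefl[of q] by (simp add: cls_def)
  then show "R p q" by (simp add: cls_def)
next
  assume "R p q"
  then show "cls R p = cls R q" unfolding cls_def using Rsym Rtrans by blast
qed

lemma cls_Q: "cls R p \<in> UNIV // {(x, y). R x y}"
  unfolding cls_def quotient_def by auto

lemma teq_refl: "teq R x x" unfolding teq_def using Rrefl by auto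
lemma teq_sym: "teq R x y \<Longrightarrow> teq R y x" unfolding teq_def using Rsym by auto
lemma teq_trans: "teq R x y \<Longrightarrow> teq R y z \<Longrightarrow> teq R x z" unfolding teq_def using Rtrans by blast
lemma teq_appR: "teq R x y \<Longrightarrow> teq R (x @ b) (y @ b)"
  unfolding teq_def using rc by (metis append.assoc)
lemma teq_appL: "teq R x y \<Longrightarrow> teq R (a @ x) (a @ y)"
  unfolding teq_def by (metis append.assoc)

lemma img_Q: "img R x \<subseteq> UNIV // {(x, y). R x y}"
  unfolding img_def using cls_Q by auto

lemma img_fin: "finite (img R x)"
  using img_Q fin finite_subset by blast

lemma img_suffix: "img R (y @ x) \<subseteq> img R x"
  unfolding img_def by (auto, metis append.assoc)

lemma grph_teq: assumes "grph R a = grph R b" shows "teq R a b"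
  unfolding teq_def
proof
  fix p
  have "(cls R p, cls R (p @ a)) \<in> grph R a" unfolding grph_def by blast
  then have "(cls R p, cls R (p @ a)) \<in> grph R b" using assms by simp
  then obtain q where q: "cls R p = cls R q" "cls R (p @ a) = cls R (q @ b)"
    unfolding grph_def by blast
  then have "R p q" using cls_eq by auto
  then have "R (p @ b) (q @ b)" by (rule rc)
  moreover have "R (p @ a) (q @ b)" using q cls_eq by auto
  ultimately show "R (p @ a) (p @ b)" using Rsym Rtrans by blast
qed

lemma idem_pow: "\<exists>N>0. teq R (pw x N @ pw x N) (pw x N)"
proof -
  define Q where "Q = UNIV // {(x, y). R x y}"
  define \<phi> where "\<phi> n = grph R (pw x (Suc n))" for n
  have "range \<phi> \<subseteq> Pow (Q \<times> Q)"
    unfolding \<phi>_def grph_def Q_def using cls_Q by auto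
  moreover have "finite (Pow (Q \<times> Q))" using fin Q_def by auto
  ultimately have "finite (range \<phi>)" using finite_subset by blast
  then have "\<not> inj \<phi>" using finite_imageD infinite_UNIV_nat by blast
  then obtain i j where "i \<noteq> j" "\<phi> i = \<phi> j" unfolding inj_def by blast
  then obtain i j where ij: "i < j" "\<phi> i = \<phi> j" by (metis linorder_neqE_nat)
  define a where "a = Suc i"
  define d where "d = j - i"
  have d0: "d > 0" using ij d_def by auto
  have base: "teq R (pw x a) (pw x (a + d))"
    using grph_teq[OF ij(2)[unfolded \<phi>_def]] ij a_def d_def by auto
  have step: "teq R (pw x (a + t)) (pw x (a + d + t))" for t
    using teq_appR[OF base, of "pw x t"] by (simp add: pw_add)
  have per: "teq R (pw x (a + t)) (pw x (a + t + q * d))" for t q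
  proof (induction q)
    case 0 then show ?case using teq_refl by simp
  next
    case (Suc q)
    have "teq R (pw x (a + (t + q * d))) (pw x (a + d + (t + q * d)))" by (rule step)
    then have "teq R (pw x (a + t + q * d)) (pw x (a + t + Suc q * d))"
      by (simp add: algebra_simps)
    then show ?case using Suc teq_trans by blast
  qed
  define N where "N = a * d"
  have "a \<le> N" using d0 N_def by simp
  then have e1: "a + (N - a) = N" by simp
  have e2: "N + a * d = N + N" by (simp add: N_def)
  have "teq R (pw x N) (pw x (N + N))" using per[of "N - a" a] by (simp only: e1 e2)
  then have "teq R (pw x N @ pw x N) (pw x N)" using teq_sym pw_add by metis
  moreover have "N > 0" using d0 N_def a_def by simp
  ultimately show ?thesis by blast
qed

lemma KL:
  assumes emin: "\<forall>y\<in>S. card (img R e) \<le> card (img R y)"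
    and hS: "h \<in> S" and ee: "teq R (e @ e) e" and hh: "teq R (h @ h) h"
    and h1: "h = e @ h1" and h2: "h = h2 @ e"
  shows "teq R h e"
proof -
  have sub: "img R h \<subseteq> img R e" using img_suffix[of h2 e] h2 by simp
  have c1: "card (img R e) \<le> card (img R h)" using emin hS by blast
  have c2: "card (img R h) \<le> card (img R e)" by (rule card_mono[OF img_fin sub])
  have eq: "img R h = img R e" by (rule card_subset_eq[OF img_fin sub]) (use c1 c2 in linarith)
  have eh: "teq R (e @ h) h" using teq_appR[OF ee, of h1] h1 by simp
  show ?thesis unfolding teq_def
  proof
    fix p
    have "cls R (p @ e) \<in> img R e" unfolding img_def by blast
    then have "cls R (p @ e) \<in> img R h" using eq by simp
    then obtain q where "cls R (p @ e) = cls R (q @ h)" unfolding img_def by blast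
    then have q: "R (p @ e) (q @ h)" using cls_eq by blast
    have a: "R (p @ e @ h) (q @ h @ h)" using rc[OF q, of h] by simp
    have b: "R (q @ h @ h) (q @ h)" using hh unfolding teq_def by simp
    have c: "R (p @ e @ h) (p @ e)" by (rule Rtrans[OF Rtrans[OF a b] Rsym[OF q]])
    have d: "R (p @ e @ h) (p @ h)" using eh unfolding teq_def by (simp only: append.assoc[symmetric])
    show "R (p @ h) (p @ e)" by (rule Rtrans[OF Rsym[OF d] c])
  qed
qed

lemma part2:
  assumes ct: "critical_tuple R u2 v2 u v"
  shows "\<exists>u2 v2 u v. critical_tuple R u2 v2 u v \<and>
       (\<forall>w \<in> word_star {u, v}. R (u2 @ u) (u2 @ w @ u) \<and> R (v2 @ u) (v2 @ w @ u))"
proof -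
  define S where "S = word_star {u, v}"
  define P where "P r = (\<exists>y\<in>S. card (img R y) = r)" for r
  have "P (card (img R []))" unfolding P_def S_def using ws_nil by blast
  then obtain r where "P r" "\<forall>r'<r. \<not> P r'" using exists_least_iff[of P] by blast
  then obtain z where zS: "z \<in> S" and zmin: "\<forall>y\<in>S. card (img R z) \<le> card (img R y)"
    unfolding P_def by (metis not_le)
  obtain N where N: "N > 0" "teq R (pw z N @ pw z N) (pw z N)" using idem_pow by blast
  define e where "e = pw z N"
  have eS: "e \<in> S" using pw_ws zS e_def S_def by blast
  have "e = pw z (N - 1) @ z" using pw_Suc2[of z "N - 1"] N e_def by simp
  then have "img R e \<subseteq> img R z" using img_suffix by metis
  then have "card (img R e) \<le> card (img R z)" using card_mono img_fin by blast
  then have emin: "\<forall>y\<in>S. card (img R e) \<le> card (img R y)" using zmin by force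
  have ee: "teq R (e @ e) e" using N e_def by simp
  have gen: "\<exists>h\<in>S. teq R h e \<and> (\<exists>h0. h = h0 @ x @ e)" if xS: "x \<in> S" for x
  proof -
    define g where "g = e @ x @ e"
    have gS: "g \<in> S" using g_def eS xS ws_app by (metis S_def)
    obtain M where M: "M > 0" "teq R (pw g M @ pw g M) (pw g M)" using idem_pow by blast
    define h where "h = pw g M"
    have hS: "h \<in> S" using pw_ws gS h_def S_def by blast
    have A: "h = e @ (x @ e @ pw g (M - 1))" using pw_Suc[of g "M - 1"] M h_def g_def by simp
    have B: "h = (pw g (M - 1) @ e @ x) @ e" using pw_Suc2[of g "M - 1"] M h_def g_def by simp
    have "teq R h e" using KL[OF emin hS ee _ A B] M h_def by simp
    then show ?thesis using hS B by auto
  qed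
  have uS: "u \<in> S" and vS: "v \<in> S" unfolding S_def by (auto intro: ws_single)
  obtain hu hu0 where hu: "hu \<in> S" "teq R hu e" "hu = hu0 @ u @ e" using gen[OF uS] by blast
  obtain hv hv0 where hv: "hv \<in> S" "teq R hv e" "hv = hv0 @ v @ e" using gen[OF vS] by blast
  from ct obtain u1 v1 where ct1: "length u2 = length v2" "length u2 \<ge> 1" "u = u1 @ u2" "v = v1 @ v2"
    and ct2: "\<forall>w \<in> word_star {u, v}. \<not> R (u2 @ w) (v2 @ w)"
    unfolding critical_tuple_def by blast
  have sub: "word_star {hu, hv} \<subseteq> S" using ws_mono[of "{hu, hv}" "{u, v}"] hu hv S_def by auto
  have crit: "critical_tuple R (u2 @ e) (v2 @ e) hu hv"
    unfolding critical_tuple_def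
  proof (intro conjI)
    show "length (u2 @ e) = length (v2 @ e)" using ct1 by simp
    show "length (u2 @ e) \<ge> 1" using ct1 by simp
    show "\<exists>u1. hu = u1 @ u2 @ e" using hu ct1 by (intro exI[of _ "hu0 @ u1"]) simp
    show "\<exists>v1. hv = v1 @ v2 @ e" using hv ct1 by (intro exI[of _ "hv0 @ v1"]) simp
    show "\<forall>w\<in>word_star {hu, hv}. \<not> R ((u2 @ e) @ w) ((v2 @ e) @ w)"
    proof
      fix w assume "w \<in> word_star {hu, hv}"
      then have "e @ w \<in> word_star {u, v}" using sub eS ws_app S_def by blast
      then show "\<not> R ((u2 @ e) @ w) ((v2 @ e) @ w)" using ct2 by simp
    qed
  qed
  have stab: "teq R (w @ hu) e" if wmem: "w \<in> word_star {hu, hv}" for w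
  proof -
    have "\<exists>ws. w = concat ws \<and> set ws \<subseteq> {hu, hv}" using wmem by (simp add: word_star_def)
    then obtain ws where ws: "w = concat ws" "set ws \<subseteq> {hu, hv}" by blast
    have "teq R (concat ws @ hu) e" using ws(2)
    proof (induction ws)
      case Nil then show ?case using hu by simp
    next
      case (Cons y ys)
      then have y: "teq R y e" and IH: "teq R (concat ys @ hu) e" using hu hv by auto
      have "teq R (y @ concat ys @ hu) (y @ e)" using teq_appL[OF IH] .
      moreover have "teq R (y @ e) (e @ e)" using teq_appR[OF y] .
      ultimately show ?case using ee teq_trans by simp
    qed
    then show ?thesis using ws by simp
  qed
  have "\<forall>w \<in> word_star {hu, hv}. R ((u2 @ e) @ hu) ((u2 @ e) @ w @ hu) \<and> R ((v2 @ e) @ hu) ((v2 @ e) @ w @ hu)"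
  proof
    fix w assume w: "w \<in> word_star {hu, hv}"
    have s1: "teq R (w @ hu) e" using stab w .
    have s2: "teq R hu e" using hu by simp
    have "teq R hu (w @ hu)" using s1 s2 teq_sym teq_trans by blast
    then have "teq R (e @ hu) (e @ w @ hu)" using teq_appL by blast
    then show "R ((u2 @ e) @ hu) ((u2 @ e) @ w @ hu) \<and> R ((v2 @ e) @ hu) ((v2 @ e) @ w @ hu)"
      unfolding teq_def by (metis append.assoc)
  qed
  then show ?thesis using crit by blast
qed

end


definition blk :: "'a list \<Rightarrow> 'a list \<Rightarrow> bool \<Rightarrow> 'a list" where
  "blk u v b = (if b then u @ v else v @ u)"

definition wd :: "'a list \<Rightarrow> 'a list \<Rightarrow> bool list \<Rightarrow> 'a list" where
  "wd u v bs = concat (map (blk u v) bs)"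

lemma wd_len: "length (wd u v bs) = length bs * (length u + length v)"
  by (induction bs) (auto simp: wd_def blk_def)

lemma blk_ws: "blk u v b \<in> word_star {u, v}"
  unfolding blk_def using ws_app[OF ws_single ws_single, of u "{u, v}" v] ws_app[OF ws_single ws_single, of v "{u, v}" u] by simp

lemma wd_ws: "wd u v bs \<in> word_star {u, v}"
proof (induction bs)
  case Nil then show ?case by (simp add: wd_def ws_nil)
next
  case (Cons b bs)
  have "wd u v (b # bs) = blk u v b @ wd u v bs" by (simp add: wd_def)
  then show ?case using ws_app[OF blk_ws Cons.IH] by simp
qed

lemma decomp: "length bs = length cs \<Longrightarrow> bs \<noteq> cs \<Longrightarrow> \<exists>A B s. s \<in> word_star {u, v} \<and>
   ((wd u v bs = A @ u @ s \<and> wd u v cs = B @ v @ s) \<or> (wd u v bs = A @ v @ s \<and> wd u v cs = B @ u @ s))"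
proof (induction bs cs rule: list_induct2)
  case Nil then show ?case by simp
next
  case (Cons x xs y ys)
  show ?case
  proof (cases "xs = ys")
    case True
    then have "x \<noteq> y" using Cons by simp
    then show ?thesis using wd_ws[of u v ys] True
      by (cases x) (auto simp: wd_def blk_def)
  next
    case False
    then obtain A B s where sS: "s \<in> word_star {u, v}" and
      "(wd u v xs = A @ u @ s \<and> wd u v ys = B @ v @ s) \<or> (wd u v xs = A @ v @ s \<and> wd u v ys = B @ u @ s)"
      using Cons by blast
    then show ?thesis
    proof (elim disjE conjE)
      assume a1: "wd u v xs = A @ u @ s" and a2: "wd u v ys = B @ v @ s"
      have "wd u v (x # xs) = (blk u v x @ A) @ u @ s" "wd u v (y # ys) = (blk u v y @ B) @ v @ s"
        using a1 a2 by (simp_all add: wd_def)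
      then show ?thesis using sS by blast
    next
      assume a1: "wd u v xs = A @ v @ s" and a2: "wd u v ys = B @ u @ s"
      have "wd u v (x # xs) = (blk u v x @ A) @ v @ s" "wd u v (y # ys) = (blk u v y @ B) @ u @ s"
        using a1 a2 by (simp_all add: wd_def)
      then show ?thesis using sS by blast
    qed
  qed
qed

lemma nonrel:
  assumes ct: "critical_tuple R u2 v2 u v" and sy: "\<And>a b. R a b \<Longrightarrow> R b a"
    and x: "x = A @ u @ s" and y: "y = B @ v @ s" and len: "length x = length y"
    and s: "s \<in> word_star {u, v}"
  shows "\<not> suffix_exp R x y"
proof
  assume se: "suffix_exp R x y"
  from ct obtain u1 v1 where ct1: "length u2 = length v2" "length u2 \<ge> 1" "u = u1 @ u2" "v = v1 @ v2"
    and ct2: "\<forall>w \<in> word_star {u, v}. \<not> R (u2 @ w) (v2 @ w)"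
    unfolding critical_tuple_def by blast
  define i where "i = length (A @ u1)"
  have i2: "i = length (B @ v1)" using len x y ct1 i_def by simp
  have dx: "drop i x = u2 @ s" using x ct1 i_def by simp
  have dy: "drop i y = v2 @ s" using y ct1 i2 by simp
  have "length u2 > 0" using ct1(2) by linarith
  then have "i < length x" using x ct1(3) i_def by simp
  then have "R (u2 @ s) (v2 @ s)" using se dx dy unfolding suffix_exp_def by metis
  then show False using ct2 s by blast
qed

lemma part1:
  fixes R :: "'a::finite list \<Rightarrow> 'a list \<Rightarrow> bool"
  assumes eqv: "equivp R" and ct: "critical_tuple R u2 v2 u v"
  shows "exp_growth (suffix_growth R)"
proof -
  have sy: "\<And>a b. R a b \<Longrightarrow> R b a" using eqv by (meson equivp_symp)
  have rf: "\<And>a. R a a" using eqv by (meson equivp_reflp)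
  define k where "k = length u + length v"
  from ct have "length u2 \<ge> 1" "\<exists>u1. u = u1 @ u2" "length v2 = length u2" "\<exists>v1. v = v1 @ v2"
    unfolding critical_tuple_def by auto
  then have k2: "k \<ge> 2" unfolding k_def by auto
  have cnt: "2 ^ m \<le> suffix_growth R (m * k)" for m
  proof -
    define r where "r = {(x, y). suffix_exp R x y}"
    define A where "A = {xs :: 'a list. length xs \<le> m * k}"
    have "finite A" using finite_lists_length_le[of "UNIV :: 'a set" "m * k"] A_def by simp
    then have finQ: "finite (A // r)" unfolding quotient_def by auto
    define g where "g bs = r `` {wd u v bs}" for bs
    have img: "g ` {bs. length bs = m} \<subseteq> A // r"
      unfolding g_def A_def using wd_len[of u v] k_def by (auto intro!: quotientI)
    have inj: "inj_on g {bs. length bs = m}"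
    proof (rule inj_onI)
      fix bs cs assume bs: "bs \<in> {bs. length bs = m}" and cs: "cs \<in> {bs. length bs = m}"
        and eq: "g bs = g cs"
      have "suffix_exp R (wd u v cs) (wd u v cs)" unfolding suffix_exp_def using rf by auto
      then have "wd u v cs \<in> g bs" using eq unfolding g_def r_def by auto
      then have se: "suffix_exp R (wd u v bs) (wd u v cs)" unfolding g_def r_def by auto
      show "bs = cs"
      proof (rule ccontr)
        assume "bs \<noteq> cs"
        then obtain A B s where s: "s \<in> word_star {u, v}" and
          d: "(wd u v bs = A @ u @ s \<and> wd u v cs = B @ v @ s) \<or> (wd u v bs = A @ v @ s \<and> wd u v cs = B @ u @ s)"
          using decomp[of bs cs u v] bs cs by auto
        have len: "length (wd u v bs) = length (wd u v cs)" using bs cs by (simp add: wd_len)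
        have se2: "suffix_exp R (wd u v cs) (wd u v bs)" using se sy len unfolding suffix_exp_def by metis
        from d show False
        proof
          assume "wd u v bs = A @ u @ s \<and> wd u v cs = B @ v @ s"
          then show False using nonrel[OF ct sy _ _ len s] se by blast
        next
          assume "wd u v bs = A @ v @ s \<and> wd u v cs = B @ u @ s"
          then show False using nonrel[OF ct sy _ _ len[symmetric] s] se2 by blast
        qed
      qed
    qed
    have "card {bs :: bool list. length bs = m} = 2 ^ m"
      using card_lists_length_eq[of "UNIV :: bool set" m] by simp
    moreover have "card {bs :: bool list. length bs = m} \<le> card (A // r)"
      using card_inj_on_le[OF inj img finQ] .
    ultimately show ?thesis unfolding suffix_growth_def A_def r_def by simp
  qed
  define c where "c = root k 2"
  have c1: "c > 1" using k2 c_def by simp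
  have "c ^ (m * k) = 2 ^ m" for m
    using k2 c_def by (simp add: mult.commute power_mult)
  then have "real (suffix_growth R (m * k)) \<ge> c ^ (m * k)" for m
    using cnt[of m] by (metis of_nat_le_iff of_nat_numeral of_nat_power)
  then have sub: "range (\<lambda>m. m * k) \<subseteq> {n. real (suffix_growth R n) \<ge> c ^ n}" by auto
  have "inj (\<lambda>m. m * k)" using k2 by (auto intro: injI)
  then have "infinite (range (\<lambda>m. m * k))" using finite_imageD infinite_UNIV_nat by blast
  then have "infinite {n. real (suffix_growth R n) \<ge> c ^ n}" using sub finite_subset by blast
  then show ?thesis unfolding exp_growth_def using c1 by blast
qed

theorem proposition15:
  fixes R :: "'a::finite list \<Rightarrow> 'a list \<Rightarrow> bool"
  assumes "right_congruence R"
    and "finite_index R"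
    and "\<exists>u2 v2 u v. critical_tuple R u2 v2 u v"
  shows "exp_growth (suffix_growth R) \<and>
    (\<exists>u2 v2 u v. critical_tuple R u2 v2 u v \<and>
       (\<forall>w \<in> word_star {u, v}. R (u2 @ u) (u2 @ w @ u) \<and> R (v2 @ u) (v2 @ w @ u)))"
proof -
  interpret rcong R
    using assms(1,2) unfolding right_congruence_def finite_index_def by unfold_locales auto
  obtain u2 v2 u v where ct: "critical_tuple R u2 v2 u v" using assms(3) by blast
  show ?thesis using part1[OF eqv ct] part2[OF ct] by blast
qed

end
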